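(* Let $f:\mathcal{S}\to\mathbb{R}$ be continuously differentiable with $f^{\inf}:=\inf_{X\in\mathcal{S}}f(X)>-\infty$, and suppose $f$ is layer-wise $(L^0,L^1)$-smooth with constants $L^0,L^1\in\mathbb{R}^p_+$. Fix $\varepsilon>0$ and let $X^0,X^1,\dots$ be the iterates of deterministic Gluon with radii $$t_i^k=\frac{\|\nabla_i f(X^k)\|_{(i)\star}}{L^0_i+L^1_i\|\nabla_i f(X^k)\|_{(i)\star}},$$ assumed well defined, i.e. $L^0_i+L^1_i\|\nabla_i f(X^k)\|_{(i)\star}>0$ whenever $\nabla_i f(X^k)\neq0$, and with $t_i^k:=0$ (so $X_i^{k+1}=X_i^k$) when $\nabla_i f(X^k)=0$. Let $\Delta^0:=f(X^0)-f^{\inf}$ and $L^1_{\max}:=\max_i L^1_i$. Then: (1) With $K:=\left\lceil \frac{2\Delta^0\sum_{i=1}^pL^0_i}{\varepsilon^2}+\frac{2\Delta^0L^1_{\max}}{\varepsilon}\right\rceil$ (provided $K\ge1$), $\min_{k=0,\dots,K-1}\sum_{i=1}^p\|\nabla_i f(X^k)\|_{(i)\star}\le\varepsilon$. (2) If moreover $L^1_i>0$ for all $i$, set $H:=\frac1p\sum_{j=1}^p\frac{1}{L^1_j}$ and $K:=\left\lceil \frac{2\Delta^0\sum_{i=1}^p \frac{L^0_i}{(L^1_i)^2}}{\varepsilon^2H^2}+\frac{2\Delta^0}{\varepsilon H}\right\rceil$; then (provided $K\ge1$) $\min_{k=0,\dots,K-1}\sum_{i=1}^p\frac{1/L^1_i}{H}\|\nabla_i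 f(X^k)\|_{(i)\star}\le\varepsilon$.
   Context: $\mathcal{S}=\mathcal{S}_1\times\cdots\times\mathcal{S}_p$ with $\mathcal{S}_i=\mathbb{R}^{m_i\times n_i}$; an element is written $X=[X_1,\dots,X_p]$. Each $\mathcal{S}_i$ carries the trace inner product $\langle X_i,Y_i\rangle_{(i)}=\operatorname{tr}(X_i^\top Y_i)$ and an arbitrary norm $\|\cdot\|_{(i)}$ with dual norm $\|Y_i\|_{(i)\star}=\sup_{\|Z_i\|_{(i)}\le 1}\langle Y_i,Z_i\rangle_{(i)}$. $\nabla_i f(X)\in\mathcal{S}_i$ denotes the block of the gradient of $f$ corresponding to $X_i$. Layer-wise $(L^0,L^1)$-smoothness: for all $i$ and all $X,Y\in\mathcal{S}$, $\|\nabla_i f(X)-\nabla_i f(Y)\|_{(i)\star}\le (L^0_i+L^1_i\|\nabla_i f(X)\|_{(i)\star})\|X_i-Y_i\|_{(i)}$. Deterministic Gluon: for $k=0,1,\dots$ and each $i$, given radius $t_i^k\ge0$, set $X_i^{k+1}\in\arg\min\{\langle \nabla_i f(X^k),X_i\rangle_{(i)}: \|X_i-X_i^k\|_{(i)}\le t_i^k\}$ (any minimizer) and $X^{k+1}=[X_1^{k+1},\dots,X_p^{k+1}]$. *)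

theory Defs
  imports Complex_Main
begin

text \<open>Blocks: a matrix in R^(m x n) is represented as a function nat => nat => real
  vanishing outside the index range {..<m} x {..<n}. An element of the product space
  S = S_0 x ... x S_(p-1) is a function nat => (block), vanishing for block index >= p.\<close>

type_synonym blk = "nat \<Rightarrow> nat \<Rightarrow> real"
type_synonym pt = "nat \<Rightarrow> blk"

definition mat_space :: "nat \<Rightarrow> nat \<Rightarrow> blk set" where
  "mat_space m n = {A. \<forall>r c. \<not> (r < m \<and> c < n) \<longrightarrow> A r c = 0}"

definition prod_space :: "nat \<Rightarrow> (nat \<Rightarrow> nat) \<Rightarrow> (nat \<Rightarrow> nat) \<Rightarrow> pt set" where
  "prod_space p m n = {X. (\<forall>i<p. X i \<in> mat_space (m i) (n i)) \<and> (\<forall>i\<ge>p. X i = (\<lambda>r c. 0))}"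

definition blk_add :: "blk \<Rightarrow> blk \<Rightarrow> blk" where
  "blk_add A B = (\<lambda>r c. A r c + B r c)"
definition blk_diff :: "blk \<Rightarrow> blk \<Rightarrow> blk" where
  "blk_diff A B = (\<lambda>r c. A r c - B r c)"
definition blk_scale :: "real \<Rightarrow> blk \<Rightarrow> blk" where
  "blk_scale a A = (\<lambda>r c. a * A r c)"

definition pt_add :: "pt \<Rightarrow> pt \<Rightarrow> pt" where
  "pt_add X Y = (\<lambda>i. blk_add (X i) (Y i))"
definition pt_diff :: "pt \<Rightarrow> pt \<Rightarrow> pt" where
  "pt_diff X Y = (\<lambda>i. blk_diff (X i) (Y i))"

definition tr_inner :: "nat \<Rightarrow> nat \<Rightarrow> blk \<Rightarrow> blk \<Rightarrow> real" where
  "tr_inner m n A B = (\<Sum>r<m. \<Sum>c<n. A r c * B r c)"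

definition S_inner :: "nat \<Rightarrow> (nat \<Rightarrow> nat) \<Rightarrow> (nat \<Rightarrow> nat) \<Rightarrow> pt \<Rightarrow> pt \<Rightarrow> real" where
  "S_inner p m n X Y = (\<Sum>i<p. tr_inner (m i) (n i) (X i) (Y i))"
definition S_norm :: "nat \<Rightarrow> (nat \<Rightarrow> nat) \<Rightarrow> (nat \<Rightarrow> nat) \<Rightarrow> pt \<Rightarrow> real" where
  "S_norm p m n X = sqrt (S_inner p m n X X)"

definition is_norm_on :: "nat \<Rightarrow> nat \<Rightarrow> (blk \<Rightarrow> real) \<Rightarrow> bool" where
  "is_norm_on m n N \<longleftrightarrow>
     (\<forall>A\<in>mat_space m n. 0 \<le> N A) \<and>
     (\<forall>A\<in>mat_space m n. N A = 0 \<longleftrightarrow> A = (\<lambda>r c. 0)) \<and>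
     (\<forall>a. \<forall>A\<in>mat_space m n. N (blk_scale a A) = \<bar>a\<bar> * N A) \<and>
     (\<forall>A\<in>mat_space m n. \<forall>B\<in>mat_space m n. N (blk_add A B) \<le> N A + N B)"

definition dual_norm :: "nat \<Rightarrow> nat \<Rightarrow> (blk \<Rightarrow> real) \<Rightarrow> blk \<Rightarrow> real" where
  "dual_norm m n N Y = Sup {tr_inner m n Y Z | Z. Z \<in> mat_space m n \<and> N Z \<le> 1}"

text \<open>f is continuously differentiable on S with gradient G (G X \<in> S for X \<in> S):
  Frechet differentiability w.r.t. the Euclidean structure of S (all norms on the
  finite-dimensional space S are equivalent), plus continuity of the gradient.\<close>
definition has_cont_gradient_on ::
  "nat \<Rightarrow> (nat \<Rightarrow> nat) \<Rightarrow> (nat \<Rightarrow> nat) \<Rightarrow> (pt \<Rightarrow> real) \<Rightarrow> (pt \<Rightarrow> pt) \<Rightarrow> bool" where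
  "has_cont_gradient_on p m n f G \<longleftrightarrow>
     (\<forall>X\<in>prod_space p m n. G X \<in> prod_space p m n) \<and>
     (\<forall>X\<in>prod_space p m n. \<forall>e>0. \<exists>d>0. \<forall>H\<in>prod_space p m n.
         S_norm p m n H < d \<longrightarrow>
         \<bar>f (pt_add X H) - f X - S_inner p m n (G X) H\<bar> \<le> e * S_norm p m n H) \<and>
     (\<forall>X\<in>prod_space p m n. \<forall>e>0. \<exists>d>0. \<forall>Y\<in>prod_space p m n.
         S_norm p m n (pt_diff Y X) < d \<longrightarrow> S_norm p m n (pt_diff (G Y) (G X)) < e)"

end

theory Submission
  imports Defs
begin


lemma mat_space_zero: "(\<lambda>r c. 0) \<in> mat_space m n"
  by (simp add: mat_space_def)
lemma mat_space_add: "A \<in> mat_space m n \<Longrightarrow> B \<in> mat_space m n \<Longrightarrow> blk_add A B \<in> mat_space m n"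
  by (simp add: mat_space_def blk_add_def)
lemma mat_space_scale: "A \<in> mat_space m n \<Longrightarrow> blk_scale a A \<in> mat_space m n"
  by (simp add: mat_space_def blk_scale_def)
lemma mat_space_diff: "A \<in> mat_space m n \<Longrightarrow> B \<in> mat_space m n \<Longrightarrow> blk_diff A B \<in> mat_space m n"
  by (simp add: mat_space_def blk_diff_def)

lemma tr_inner_add2: "tr_inner m n Y (blk_add A B) = tr_inner m n Y A + tr_inner m n Y B"
  by (simp add: tr_inner_def blk_add_def distrib_left sum.distrib)
lemma tr_inner_scale2: "tr_inner m n Y (blk_scale a A) = a * tr_inner m n Y A"
  by (simp add: tr_inner_def blk_scale_def sum_distrib_left mult_ac)
lemma tr_inner_diff2: "tr_inner m n Y (blk_diff A B) = tr_inner m n Y A - tr_inner m n Y B"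
  by (simp add: tr_inner_def blk_diff_def right_diff_distrib sum_subtractf)
lemma tr_inner_diff1: "tr_inner m n (blk_diff A B) Y = tr_inner m n A Y - tr_inner m n B Y"
  by (simp add: tr_inner_def blk_diff_def left_diff_distrib sum_subtractf)
lemma tr_inner_zero1: "tr_inner m n (\<lambda>r c. 0) Y = 0"
  by (simp add: tr_inner_def)
lemma tr_inner_zero2: "tr_inner m n Y (\<lambda>r c. 0) = 0"
  by (simp add: tr_inner_def)

context
  fixes m n :: nat and N :: "blk \<Rightarrow> real"
  assumes nrm: "is_norm_on m n N"
begin

lemma N_nonneg: "A \<in> mat_space m n \<Longrightarrow> 0 \<le> N A"
  using nrm by (simp add: is_norm_on_def)
lemma N_eq0: "A \<in> mat_space m n \<Longrightarrow> N A = 0 \<longleftrightarrow> A = (\<lambda>r c. 0)"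
  using nrm by (simp add: is_norm_on_def)
lemma N_zero: "N (\<lambda>r c. 0) = 0"
  using N_eq0[OF mat_space_zero] by simp
lemma N_scale: "A \<in> mat_space m n \<Longrightarrow> N (blk_scale a A) = \<bar>a\<bar> * N A"
  using nrm by (simp add: is_norm_on_def)
lemma N_tri: "A \<in> mat_space m n \<Longrightarrow> B \<in> mat_space m n \<Longrightarrow> N (blk_add A B) \<le> N A + N B"
  using nrm by (simp add: is_norm_on_def)

definition E :: "nat \<Rightarrow> nat \<Rightarrow> blk" where "E a b = (\<lambda>r c. if r = a \<and> c = b then 1 else 0)"
definition restr :: "(nat \<times> nat) set \<Rightarrow> blk \<Rightarrow> blk" where
  "restr S Z = (\<lambda>r c. if (r, c) \<in> S then Z r c else 0)"

lemma N_restr_le: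
  assumes "finite S" "S \<subseteq> {..<m} \<times> {..<n}"
  shows "N (restr S Z) \<le> (\<Sum>x\<in>S. \<bar>Z (fst x) (snd x)\<bar> * N (E (fst x) (snd x)))"
  using assms
proof (induction S rule: finite_induct)
  case empty
  then show ?case by (simp add: restr_def N_zero)
next
  case (insert a S)
  have eq: "restr (insert a S) Z = blk_add (restr S Z) (blk_scale (Z (fst a) (snd a)) (E (fst a) (snd a)))"
    using insert(2) by (auto simp: restr_def blk_add_def blk_scale_def E_def fun_eq_iff)
  have m1: "restr S Z \<in> mat_space m n" using insert(4) by (auto simp: restr_def mat_space_def)
  have m2: "E (fst a) (snd a) \<in> mat_space m n" using insert(4) by (auto simp: E_def mat_space_def)
  have "N (restr (insert a S) Z) \<le> N (restr S Z) + \<bar>Z (fst a) (snd a)\<bar> * N (E (fst a) (snd a))"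
    unfolding eq using N_tri[OF m1 mat_space_scale[OF m2]] N_scale[OF m2] by simp
  also have "\<dots> \<le> (\<Sum>x\<in>S. \<bar>Z (fst x) (snd x)\<bar> * N (E (fst x) (snd x))) + \<bar>Z (fst a) (snd a)\<bar> * N (E (fst a) (snd a))"
    using insert by simp
  finally show ?case using insert(1,2) by (simp add: add.commute)
qed

lemma N_le_sum:
  assumes "Z \<in> mat_space m n"
  shows "N Z \<le> (\<Sum>x\<in>{..<m} \<times> {..<n}. \<bar>Z (fst x) (snd x)\<bar> * N (E (fst x) (snd x)))"
proof -
  have "restr ({..<m} \<times> {..<n}) Z = Z" using assms by (auto simp: restr_def mat_space_def fun_eq_iff)
  then show ?thesis using N_restr_le[of "{..<m} \<times> {..<n}" Z] by simp
qed

end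

lemma subseq_coords:
  fixes F :: "nat \<Rightarrow> 'a \<Rightarrow> real"
  assumes "finite I" "\<forall>j x. \<bar>F j x\<bar> \<le> B"
  shows "\<exists>\<sigma>. strict_mono \<sigma> \<and> (\<forall>x\<in>I. convergent (\<lambda>j. F (\<sigma> j) x))"
  using assms(1)
proof (induction I rule: finite_induct)
  case empty
  then show ?case by (rule exI[of _ id]) (auto simp: strict_mono_def)
next
  case (insert a I)
  then obtain \<sigma> where s1: "strict_mono \<sigma>" and s2: "\<forall>x\<in>I. convergent (\<lambda>j. F (\<sigma> j) x)" by blast
  obtain \<tau> where t1: "strict_mono \<tau>" and t2: "monoseq (\<lambda>j. F (\<sigma> (\<tau> j)) a)"
    using seq_monosub[of "\<lambda>j. F (\<sigma> j) a"] by blast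
  have "Bseq (\<lambda>j. F (\<sigma> (\<tau> j)) a)" using assms(2) by (intro BseqI'[of _ B]) auto
  then have ca: "convergent (\<lambda>j. F (\<sigma> (\<tau> j)) a)" using t2 by (rule Bseq_monoseq_convergent)
  have "\<forall>x\<in>I. convergent (\<lambda>j. F (\<sigma> (\<tau> j)) x)"
  proof
    fix x assume "x \<in> I"
    then have "convergent ((\<lambda>j. F (\<sigma> j) x) \<circ> \<tau>)" using s2 t1 convergent_subseq_convergent by blast
    then show "convergent (\<lambda>j. F (\<sigma> (\<tau> j)) x)" by (simp add: o_def)
  qed
  with ca have "\<forall>x\<in>insert a I. convergent (\<lambda>j. F ((\<sigma> \<circ> \<tau>) j) x)" by auto
  moreover have "strict_mono (\<sigma> \<circ> \<tau>)" using s1 t1 by (rule strict_mono_o)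
  ultimately show ?case by blast
qed


definition l1 :: "nat \<Rightarrow> nat \<Rightarrow> blk \<Rightarrow> real" where
  "l1 m n Z = (\<Sum>x\<in>{..<m} \<times> {..<n}. \<bar>Z (fst x) (snd x)\<bar>)"

lemma norm_lower:
  assumes nrm: "is_norm_on m n N"
  shows "\<exists>C>0. \<forall>Z\<in>mat_space m n. l1 m n Z \<le> C * N Z"
proof (rule ccontr)
  assume H: "\<not> ?thesis"
  have "\<exists>Z\<in>mat_space m n. l1 m n Z > (real j + 1) * N Z" for j :: nat
  proof -
    have "\<not> (\<forall>Z\<in>mat_space m n. l1 m n Z \<le> (real j + 1) * N Z)"
      proof
      assume "\<forall>Z\<in>mat_space m n. l1 m n Z \<le> (real j + 1) * N Z"
      moreover have "(0::real) < real j + 1" by simp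
      ultimately show False using H by blast
    qed
    then show ?thesis by (auto simp: not_le)
  qed
  then obtain Zs where Zs: "\<And>j. Zs j \<in> mat_space m n" "\<And>j. l1 m n (Zs j) > (real j + 1) * N (Zs j)"
    by metis
  define P where "P = {..<m} \<times> {..<n}"
  have fP: "finite P" by (simp add: P_def)
  have l1pos: "l1 m n (Zs j) > 0" for j
  proof -
    have "0 \<le> (real j + 1) * N (Zs j)" using N_nonneg[OF nrm Zs(1)] by simp
    then show ?thesis using Zs(2)[of j] by linarith
  qed
  define W where "W j = blk_scale (1 / l1 m n (Zs j)) (Zs j)" for j
  have Wm: "W j \<in> mat_space m n" for j using Zs(1) by (simp add: W_def mat_space_scale)
  have l1W: "l1 m n (W j) = 1" for j
  proof -
    have "l1 m n (W j) = (1 / l1 m n (Zs j)) * l1 m n (Zs j)"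
      using l1pos[of j] by (simp add: l1_def W_def blk_scale_def abs_mult sum_distrib_left)
    then show ?thesis using l1pos[of j] by simp
  qed
  have NW: "N (W j) < inverse (real (Suc j))" for j
  proof -
    have "N (W j) = N (Zs j) / l1 m n (Zs j)" using N_scale[OF nrm Zs(1)] l1pos[of j] by (simp add: W_def)
    also have "\<dots> < inverse (real (Suc j))" using Zs(2)[of j] l1pos[of j]
      by (simp add: field_simps)
    finally show ?thesis .
  qed
  have Wb: "\<forall>j x. \<bar>(\<lambda>j x. W j (fst x) (snd x)) j x\<bar> \<le> 1"
  proof (intro allI)
    fix j x
    show "\<bar>(\<lambda>j x. W j (fst x) (snd x)) j x\<bar> \<le> 1"
    proof (cases "x \<in> P")
      case True
      then have "\<bar>W j (fst x) (snd x)\<bar> \<le> l1 m n (W j)" unfolding l1_def P_def[symmetric]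
        using fP by (intro member_le_sum) auto
      then show ?thesis using l1W by simp
    next
      case False then have "W j (fst x) (snd x) = 0" using Wm[of j] unfolding mat_space_def P_def by (cases x) auto
      then show ?thesis by simp
    qed
  qed
  obtain \<sigma> where \<sigma>: "strict_mono \<sigma>" "\<forall>x\<in>P. convergent (\<lambda>j. W (\<sigma> j) (fst x) (snd x))"
    using subseq_coords[OF fP Wb] by auto
  define W0 where "W0 = (\<lambda>r c. if r < m \<and> c < n then lim (\<lambda>j. W (\<sigma> j) r c) else 0)"
  have W0m: "W0 \<in> mat_space m n" by (simp add: W0_def mat_space_def)
  have conv: "(\<lambda>j. W (\<sigma> j) (fst x) (snd x)) \<longlonglongrightarrow> W0 (fst x) (snd x)" if "x \<in> P" for x
    using \<sigma>(2) that by (auto simp: W0_def P_def convergent_LIMSEQ_iff)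
  have "(\<lambda>j. l1 m n (W (\<sigma> j))) \<longlonglongrightarrow> l1 m n W0"
    unfolding l1_def P_def[symmetric] by (intro tendsto_sum tendsto_rabs conv)
  then have l1W0: "l1 m n W0 = 1" using l1W by (simp add: LIMSEQ_const_iff)
  have bnd: "N W0 \<le> (\<Sum>x\<in>P. \<bar>W0 (fst x) (snd x) - W (\<sigma> j) (fst x) (snd x)\<bar> * N (E (fst x) (snd x))) + inverse (real (Suc j))" for j
  proof -
    have "W0 = blk_add (blk_diff W0 (W (\<sigma> j))) (W (\<sigma> j))" by (simp add: blk_add_def blk_diff_def)
    then have "N W0 \<le> N (blk_diff W0 (W (\<sigma> j))) + N (W (\<sigma> j))"
      using N_tri[OF nrm mat_space_diff[OF W0m Wm] Wm] by metis
    also have "N (blk_diff W0 (W (\<sigma> j))) \<le> (\<Sum>x\<in>P. \<bar>W0 (fst x) (snd x) - W (\<sigma> j) (fst x) (snd x)\<bar> * N (E (fst x) (snd x)))"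
      using N_le_sum[OF nrm mat_space_diff[OF W0m Wm]] by (simp add: P_def blk_diff_def)
    also have "N (W (\<sigma> j)) \<le> inverse (real (Suc j))"
    proof -
      have "j \<le> \<sigma> j" using seq_suble[OF \<sigma>(1)] by simp
      then have "inverse (real (Suc (\<sigma> j))) \<le> inverse (real (Suc j))" by (simp add: le_imp_inverse_le)
      then show ?thesis using NW[of "\<sigma> j"] by linarith
    qed
    finally show ?thesis by simp
  qed
  have t1: "(\<lambda>j. \<bar>W0 (fst x) (snd x) - W (\<sigma> j) (fst x) (snd x)\<bar> * N (E (fst x) (snd x))) \<longlonglongrightarrow> 0"
    if "x \<in> P" for x
  proof -
    have "(\<lambda>j. \<bar>W0 (fst x) (snd x) - W (\<sigma> j) (fst x) (snd x)\<bar> * N (E (fst x) (snd x))) \<longlonglongrightarrow>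
       \<bar>W0 (fst x) (snd x) - W0 (fst x) (snd x)\<bar> * N (E (fst x) (snd x))"
      by (intro tendsto_intros conv that)
    then show ?thesis by simp
  qed
  have "(\<lambda>j. (\<Sum>x\<in>P. \<bar>W0 (fst x) (snd x) - W (\<sigma> j) (fst x) (snd x)\<bar> * N (E (fst x) (snd x))) + inverse (real (Suc j)))
     \<longlonglongrightarrow> (\<Sum>x\<in>P. 0) + 0"
    by (intro tendsto_add tendsto_sum t1 LIMSEQ_inverse_real_of_nat)
  then have "N W0 \<le> 0" using bnd by (intro LIMSEQ_le_const) auto
  then have "W0 = (\<lambda>r c. 0)" using N_nonneg[OF nrm W0m] N_eq0[OF nrm W0m] by simp
  then have "l1 m n W0 = 0" by (simp add: l1_def)
  then show False using l1W0 by simp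
qed


lemma tr_inner_le_l1:
  assumes "Z \<in> mat_space m n"
  shows "tr_inner m n Y Z \<le> l1 m n Y * l1 m n Z"
proof -
  define P where "P = {..<m} \<times> {..<n}"
  have fP: "finite P" by (simp add: P_def)
  have "tr_inner m n Y Z = (\<Sum>x\<in>P. Y (fst x) (snd x) * Z (fst x) (snd x))"
    by (simp add: tr_inner_def P_def sum.cartesian_product case_prod_beta)
  also have "\<dots> \<le> (\<Sum>x\<in>P. l1 m n Y * \<bar>Z (fst x) (snd x)\<bar>)"
  proof (rule sum_mono)
    fix x assume x: "x \<in> P"
    have "\<bar>Y (fst x) (snd x)\<bar> \<le> l1 m n Y" unfolding l1_def P_def[symmetric]
      using fP x by (intro member_le_sum) auto
    then have "\<bar>Y (fst x) (snd x)\<bar> * \<bar>Z (fst x) (snd x)\<bar> \<le> l1 m n Y * \<bar>Z (fst x) (snd x)\<bar>"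
      by (simp add: mult_right_mono)
    then show "Y (fst x) (snd x) * Z (fst x) (snd x) \<le> l1 m n Y * \<bar>Z (fst x) (snd x)\<bar>"
      by (metis abs_ge_self abs_mult order_trans)
  qed
  also have "\<dots> = l1 m n Y * l1 m n Z" by (simp add: l1_def P_def sum_distrib_left)
  finally show ?thesis .
qed

context
  fixes m n :: nat and N :: "blk \<Rightarrow> real"
  assumes nrm: "is_norm_on m n N"
begin

lemma dual_bdd: "bdd_above {tr_inner m n Y Z | Z. Z \<in> mat_space m n \<and> N Z \<le> 1}"
proof -
  obtain C where C: "C > 0" "\<forall>Z\<in>mat_space m n. l1 m n Z \<le> C * N Z" using norm_lower[OF nrm] by blast
  have l1Y: "0 \<le> l1 m n Y" by (simp add: l1_def sum_nonneg)
  show ?thesis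
  proof (rule bdd_aboveI[of _ "l1 m n Y * C"])
    fix v assume "v \<in> {tr_inner m n Y Z | Z. Z \<in> mat_space m n \<and> N Z \<le> 1}"
    then obtain Z where Z: "Z \<in> mat_space m n" "N Z \<le> 1" "v = tr_inner m n Y Z" by blast
    have "l1 m n Z \<le> C" using C Z by (smt (verit) mult_left_mono mult.commute mult_cancel_left1)
    then have "l1 m n Y * l1 m n Z \<le> l1 m n Y * C" using l1Y by (simp add: mult_left_mono)
    then show "v \<le> l1 m n Y * C" using tr_inner_le_l1[OF Z(1), of Y] Z(3) by linarith
  qed
qed

lemma dual_nonneg: "0 \<le> dual_norm m n N Y"
  unfolding dual_norm_def
proof (rule cSup_upper2[OF _ _ dual_bdd])
  show "tr_inner m n Y (\<lambda>r c. 0) \<in> {tr_inner m n Y Z | Z. Z \<in> mat_space m n \<and> N Z \<le> 1}"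
    using mat_space_zero N_zero[OF nrm] by fastforce
qed (simp add: tr_inner_zero2)

lemma dual_ge:
  assumes Z: "Z \<in> mat_space m n"
  shows "tr_inner m n Y Z \<le> dual_norm m n N Y * N Z"
proof (cases "N Z = 0")
  case True
  then have "Z = (\<lambda>r c. 0)" using N_eq0[OF nrm Z] by simp
  then show ?thesis using True by (simp add: tr_inner_zero2)
next
  case False
  then have pos: "N Z > 0" using N_nonneg[OF nrm Z] by simp
  define Z' where "Z' = blk_scale (1 / N Z) Z"
  have Z'm: "Z' \<in> mat_space m n" using Z by (simp add: Z'_def mat_space_scale)
  have "N Z' = 1" using N_scale[OF nrm Z] pos by (simp add: Z'_def)
  then have "tr_inner m n Y Z' \<le> dual_norm m n N Y"
    unfolding dual_norm_def using Z'm by (intro cSup_upper[OF _ dual_bdd]) auto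
  moreover have "tr_inner m n Y Z' = tr_inner m n Y Z / N Z" by (simp add: Z'_def tr_inner_scale2)
  ultimately show ?thesis using pos by (simp add: divide_le_eq)
qed

lemma dual_least:
  assumes "\<And>Z. Z \<in> mat_space m n \<Longrightarrow> N Z \<le> 1 \<Longrightarrow> tr_inner m n Y Z \<le> b"
  shows "dual_norm m n N Y \<le> b"
  unfolding dual_norm_def
proof (rule cSup_least)
  show "{tr_inner m n Y Z | Z. Z \<in> mat_space m n \<and> N Z \<le> 1} \<noteq> {}"
    using mat_space_zero N_zero[OF nrm] by fastforce
qed (use assms in auto)

lemma dual_zero: "dual_norm m n N (\<lambda>r c. 0) = 0"
  using dual_least[of "\<lambda>r c. 0" 0] dual_nonneg[of "\<lambda>r c. 0"] by (simp add: tr_inner_zero1)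

end



lemma block_step:
  assumes nrm: "is_norm_on m n N"
    and Xk: "Xk \<in> mat_space m n"
    and a_nn: "0 \<le> a" and apos: "g \<noteq> (\<lambda>r c. 0) \<Longrightarrow> 0 < a"
    and t_def: "t = (if g = (\<lambda>r c. 0) then 0 else dual_norm m n N g / a)"
    and Xn: "Xn \<in> mat_space m n" and Dt: "N (blk_diff Xn Xk) \<le> t"
    and minim: "\<forall>Y\<in>{Y \<in> mat_space m n. N (blk_diff Y Xk) \<le> t}. tr_inner m n g Xn \<le> tr_inner m n g Y"
  shows "tr_inner m n g (blk_diff Xn Xk) + a / 2 * (N (blk_diff Xn Xk))^2 \<le> - ((dual_norm m n N g)^2 / (2 * a))"
proof -
  define D where "D = blk_diff Xn Xk"
  define x where "x = dual_norm m n N g"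
  have Dm: "D \<in> mat_space m n" using Xn Xk by (simp add: D_def mat_space_diff)
  have nD: "0 \<le> N D" using N_nonneg[OF nrm Dm] .
  have x0: "0 \<le> x" using dual_nonneg[OF nrm] by (simp add: x_def)
  show ?thesis
  proof (cases "g = (\<lambda>r c. 0)")
    case True
    then have "t = 0" using t_def by simp
    then have "N D = 0" using Dt nD by (simp add: D_def)
    moreover have "x = 0" using True dual_zero[OF nrm] by (simp add: x_def)
    ultimately show ?thesis using True dual_zero[OF nrm] by (simp add: D_def[symmetric] tr_inner_zero1)
  next
    case False
    then have a0: "0 < a" using apos by simp
    have tdef: "t = x / a" using t_def False by (simp add: x_def)
    have t0: "0 \<le> t" using tdef x0 a0 by simp
    have trD: "tr_inner m n g D \<le> - (t * x)"
    proof (cases "t = 0")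
      case True
      then have "N D = 0" using Dt nD by (simp add: D_def)
      then have "D = (\<lambda>r c. 0)" using N_eq0[OF nrm Dm] by simp
      then show ?thesis using True by (simp add: tr_inner_zero2)
    next
      case False
      then have tp: "0 < t" using t0 by simp
      have "x \<le> - tr_inner m n g D / t" unfolding x_def
      proof (rule dual_least[OF nrm])
        fix Z assume Z: "Z \<in> mat_space m n" "N Z \<le> 1"
        define Y where "Y = blk_add Xk (blk_scale (-t) Z)"
        have Ym: "Y \<in> mat_space m n" using Xk Z by (simp add: Y_def mat_space_add mat_space_scale)
        have "blk_diff Y Xk = blk_scale (-t) Z" by (simp add: Y_def blk_diff_def blk_add_def blk_scale_def)
        then have "N (blk_diff Y Xk) = t * N Z" using N_scale[OF nrm Z(1)] tp by simp
        also have "\<dots> \<le> t" using Z(2) tp by (simp add: mult_left_le)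
        finally have "tr_inner m n g Xn \<le> tr_inner m n g Y" using minim Ym by blast
        also have "\<dots> = tr_inner m n g Xk - t * tr_inner m n g Z"
          by (simp add: Y_def tr_inner_add2 tr_inner_scale2)
        finally have "t * tr_inner m n g Z \<le> - tr_inner m n g D"
          by (simp add: D_def tr_inner_diff2)
        then show "tr_inner m n g Z \<le> - tr_inner m n g D / t" using tp by (metis pos_le_divide_eq mult.commute)
      qed
      then have "x * t \<le> - tr_inner m n g D" using tp by (metis pos_le_divide_eq)
      then show ?thesis by (simp add: mult.commute)
    qed
    have "(N D)^2 \<le> t^2" using Dt nD by (simp add: D_def power_mono)
    then have "a / 2 * (N D)^2 \<le> a / 2 * t^2" using a0 by simp
    with trD have "tr_inner m n g D + a / 2 * (N D)^2 \<le> - (t * x) + a / 2 * t^2" by linarith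
    also have "\<dots> = - (x^2 / (2 * a))" using a0 by (simp add: tdef field_simps power2_eq_square)
    finally show ?thesis by (simp add: D_def x_def)
  qed
qed

definition line :: "pt \<Rightarrow> pt \<Rightarrow> real \<Rightarrow> pt" where
  "line X D \<tau> = pt_add X (\<lambda>i. blk_scale \<tau> (D i))"

lemma prod_space_scale: "D \<in> prod_space p m n \<Longrightarrow> (\<lambda>i. blk_scale s (D i)) \<in> prod_space p m n"
  by (auto simp: prod_space_def mat_space_scale) (auto simp: blk_scale_def)
lemma prod_space_add: "X \<in> prod_space p m n \<Longrightarrow> Y \<in> prod_space p m n \<Longrightarrow> pt_add X Y \<in> prod_space p m n"
  by (auto simp: prod_space_def mat_space_add pt_add_def) (auto simp: blk_add_def)
lemma prod_space_diff: "X \<in> prod_space p m n \<Longrightarrow> Y \<in> prod_space p m n \<Longrightarrow> pt_diff X Y \<in> prod_space p m n"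
  by (auto simp: prod_space_def mat_space_diff pt_diff_def) (auto simp: blk_diff_def)
lemma prod_space_line: "X \<in> prod_space p m n \<Longrightarrow> D \<in> prod_space p m n \<Longrightarrow> line X D \<tau> \<in> prod_space p m n"
  by (simp add: line_def prod_space_add prod_space_scale)

lemma tr_inner_scale1: "tr_inner m n (blk_scale a A) Y = a * tr_inner m n A Y"
  by (simp add: tr_inner_def blk_scale_def sum_distrib_left mult_ac)

lemma S_inner_scale2: "S_inner p m n Y (\<lambda>i. blk_scale s (D i)) = s * S_inner p m n Y D"
  by (simp add: S_inner_def tr_inner_scale2 sum_distrib_left)
lemma S_inner_scale1: "S_inner p m n (\<lambda>i. blk_scale s (D i)) Y = s * S_inner p m n D Y"
  by (simp add: S_inner_def tr_inner_scale1 sum_distrib_left)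
lemma S_inner_self_nonneg: "0 \<le> S_inner p m n D D"
  by (auto simp: S_inner_def tr_inner_def intro!: sum_nonneg)
lemma S_norm_nonneg: "0 \<le> S_norm p m n D"
  by (simp add: S_norm_def S_inner_self_nonneg)
lemma S_norm_scale: "S_norm p m n (\<lambda>i. blk_scale s (D i)) = \<bar>s\<bar> * S_norm p m n D"
proof -
  have "S_inner p m n (\<lambda>i. blk_scale s (D i)) (\<lambda>i. blk_scale s (D i)) = s^2 * S_inner p m n D D"
    by (simp add: S_inner_scale1 S_inner_scale2 power2_eq_square)
  then show ?thesis by (simp add: S_norm_def real_sqrt_mult)
qed

lemma line_add: "pt_add (line X D \<tau>) (\<lambda>i. blk_scale h (D i)) = line X D (\<tau> + h)"
  by (simp add: line_def pt_add_def blk_add_def blk_scale_def fun_eq_iff distrib_right)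

lemma deriv_line:
  assumes grad: "has_cont_gradient_on p m n f G"
    and X: "X \<in> prod_space p m n" and D: "D \<in> prod_space p m n"
  shows "((\<lambda>\<tau>. f (line X D \<tau>)) has_real_derivative S_inner p m n (G (line X D \<tau>)) D) (at \<tau>)"
  unfolding DERIV_def
proof (rule LIM_I)
  fix r :: real assume r: "0 < r"
  define Y where "Y = line X D \<tau>"
  define SD where "SD = S_norm p m n D"
  define c where "c = S_inner p m n (G Y) D"
  have SD0: "0 \<le> SD" by (simp add: SD_def S_norm_nonneg)
  have Yp: "Y \<in> prod_space p m n" using X D by (simp add: Y_def prod_space_line)
  define e where "e = r / (2 * (SD + 1))"
  have e0: "0 < e" using r SD0 by (simp add: e_def)
  obtain d where d: "d > 0" "\<forall>H\<in>prod_space p m n. S_norm p m n H < d \<longrightarrow>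
         \<bar>f (pt_add Y H) - f Y - S_inner p m n (G Y) H\<bar> \<le> e * S_norm p m n H"
    using grad Yp e0 unfolding has_cont_gradient_on_def by blast
  have eSD: "e * SD < r"
  proof -
    have "e * SD \<le> e * (SD + 1)" using e0 by simp
    also have "\<dots> = r / 2" using SD0 by (simp add: e_def field_simps)
    finally show ?thesis using r by simp
  qed
  show "\<exists>s>0. \<forall>h. h \<noteq> 0 \<and> norm (h - 0) < s \<longrightarrow>
      norm ((f (line X D (\<tau> + h)) - f (line X D \<tau>)) / h - S_inner p m n (G (line X D \<tau>)) D) < r"
  proof (intro exI[of _ "d / (SD + 1)"] conjI allI impI)
    show "0 < d / (SD + 1)" using d SD0 by simp
    fix h :: real assume h: "h \<noteq> 0 \<and> norm (h - 0) < d / (SD + 1)"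
    define H where "H = (\<lambda>i. blk_scale h (D i))"
    have Hp: "H \<in> prod_space p m n" using D by (simp add: H_def prod_space_scale)
    have SH: "S_norm p m n H = \<bar>h\<bar> * SD" by (simp add: H_def S_norm_scale SD_def)
    have "\<bar>h\<bar> * SD \<le> \<bar>h\<bar> * (SD + 1)" by (simp add: mult_left_mono)
    also have "\<bar>h\<bar> * (SD + 1) < d" using h SD0 by (simp add: pos_less_divide_eq)
    finally have "S_norm p m n H < d" using SH by simp
    then have "\<bar>f (pt_add Y H) - f Y - S_inner p m n (G Y) H\<bar> \<le> e * S_norm p m n H" using d Hp by blast
    moreover have "pt_add Y H = line X D (\<tau> + h)" by (simp add: Y_def H_def line_add)
    moreover have "S_inner p m n (G Y) H = h * c" by (simp add: H_def S_inner_scale2 c_def)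
    ultimately have bnd: "\<bar>f (line X D (\<tau> + h)) - f Y - h * c\<bar> \<le> e * (\<bar>h\<bar> * SD)" using SH by simp
    have "(f (line X D (\<tau> + h)) - f Y) / h - c = (f (line X D (\<tau> + h)) - f Y - h * c) / h"
      using h by (simp add: field_simps)
    then have "\<bar>(f (line X D (\<tau> + h)) - f Y) / h - c\<bar> = \<bar>f (line X D (\<tau> + h)) - f Y - h * c\<bar> / \<bar>h\<bar>"
      by (simp add: abs_divide)
    also have "\<dots> \<le> e * SD" using bnd h by (simp add: divide_le_eq mult_ac)
    finally show "norm ((f (line X D (\<tau> + h)) - f (line X D \<tau>)) / h - S_inner p m n (G (line X D \<tau>)) D) < r"
      using eSD by (simp add: Y_def c_def)
  qed
qed



lemma descent:
  assumes norms: "\<forall>i<p. is_norm_on (m i) (n i) (N i)"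
    and grad: "has_cont_gradient_on p m n f G"
    and smooth: "\<forall>i<p. \<forall>Y\<in>prod_space p m n. \<forall>Z\<in>prod_space p m n.
        dual_norm (m i) (n i) (N i) (blk_diff (G Y i) (G Z i))
          \<le> (L0 i + L1 i * dual_norm (m i) (n i) (N i) (G Y i)) * N i (blk_diff (Y i) (Z i))"
    and L_nonneg: "\<forall>i<p. 0 \<le> L0 i \<and> 0 \<le> L1 i"
    and X: "X \<in> prod_space p m n" and X': "X' \<in> prod_space p m n"
  shows "f X' \<le> f X + (\<Sum>i<p. tr_inner (m i) (n i) (G X i) (blk_diff (X' i) (X i))
      + (L0 i + L1 i * dual_norm (m i) (n i) (N i) (G X i)) / 2 * (N i (blk_diff (X' i) (X i)))^2)"
proof -
  define D where "D = pt_diff X' X"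
  have Dp: "D \<in> prod_space p m n" using X X' by (simp add: D_def prod_space_diff)
  have Di: "D i = blk_diff (X' i) (X i)" for i by (simp add: D_def pt_diff_def)
  have Dm: "D i \<in> mat_space (m i) (n i)" if "i < p" for i using Dp that by (simp add: prod_space_def)
  define a where "a i = L0 i + L1 i * dual_norm (m i) (n i) (N i) (G X i)" for i
  have a0: "0 \<le> a i" if "i < p" for i
    using L_nonneg that dual_nonneg[OF norms[rule_format, OF that]] by (simp add: a_def)
  define A where "A = (\<Sum>i<p. a i * (N i (D i))^2)"
  define c0 where "c0 = S_inner p m n (G X) D"
  define \<phi> where "\<phi> \<tau> = f (line X D \<tau>) - \<tau> * c0 - \<tau>^2 / 2 * A" for \<tau>
  have der: "(\<phi> has_real_derivative (S_inner p m n (G (line X D \<tau>)) D - c0 - \<tau> * A)) (at \<tau>)" for \<tau>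
  proof -
    have "((\<lambda>\<tau>. f (line X D \<tau>) - \<tau> * c0 - \<tau>^2 / 2 * A) has_real_derivative
        (S_inner p m n (G (line X D \<tau>)) D - c0 - \<tau> * A)) (at \<tau>)"
      by (auto intro!: derivative_eq_intros deriv_line[OF grad X Dp] simp: power2_eq_square)
    then show ?thesis unfolding \<phi>_def by (simp add: power2_eq_square)
  qed
  have nonpos: "S_inner p m n (G (line X D \<tau>)) D - c0 - \<tau> * A \<le> 0" if t: "0 \<le> \<tau>" for \<tau>
  proof -
    define Y where "Y = line X D \<tau>"
    have Yp: "Y \<in> prod_space p m n" using X Dp by (simp add: Y_def prod_space_line)
    have "S_inner p m n (G Y) D - c0 = (\<Sum>i<p. tr_inner (m i) (n i) (blk_diff (G Y i) (G X i)) (D i))"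
      by (simp add: c0_def S_inner_def tr_inner_diff1 sum_subtractf)
    also have "\<dots> \<le> (\<Sum>i<p. \<tau> * (a i * (N i (D i))^2))"
    proof (rule sum_mono)
      fix i assume "i \<in> {..<p}"
      then have i: "i < p" by simp
      note nrm = norms[rule_format, OF i]
      have GX: "G X i \<in> mat_space (m i) (n i)" and GY: "G Y i \<in> mat_space (m i) (n i)"
        using grad X Yp i unfolding has_cont_gradient_on_def prod_space_def by blast+
      have nD: "0 \<le> N i (D i)" using N_nonneg[OF nrm Dm[OF i]] .
      have "tr_inner (m i) (n i) (blk_diff (G Y i) (G X i)) (D i)
          = tr_inner (m i) (n i) (blk_diff (G X i) (G Y i)) (blk_scale (-1) (D i))"
        by (simp add: tr_inner_scale2 tr_inner_diff1)
      also have "\<dots> \<le> dual_norm (m i) (n i) (N i) (blk_diff (G X i) (G Y i)) * N i (blk_scale (-1) (D i))"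
        by (rule dual_ge[OF nrm mat_space_scale[OF Dm[OF i]]])
      also have "N i (blk_scale (-1) (D i)) = N i (D i)" using N_scale[OF nrm Dm[OF i]] by simp
      also have "dual_norm (m i) (n i) (N i) (blk_diff (G X i) (G Y i)) \<le> a i * N i (blk_diff (X i) (Y i))"
        using smooth i X Yp by (simp add: a_def)
      also have "blk_diff (X i) (Y i) = blk_scale (-\<tau>) (D i)"
        by (simp add: Y_def line_def pt_add_def blk_add_def blk_diff_def blk_scale_def)
      also have "N i (blk_scale (-\<tau>) (D i)) = \<tau> * N i (D i)" using N_scale[OF nrm Dm[OF i]] t by simp
      finally show "tr_inner (m i) (n i) (blk_diff (G Y i) (G X i)) (D i) \<le> \<tau> * (a i * (N i (D i))^2)"
        using nD by (simp add: mult_right_mono power2_eq_square mult_ac)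
    qed
    also have "\<dots> = \<tau> * A" by (simp add: A_def sum_distrib_left)
    finally show ?thesis by (simp add: Y_def)
  qed
  have "\<phi> 1 \<le> \<phi> 0"
  proof (rule DERIV_nonpos_imp_nonincreasing[of 0 1])
    fix x :: real assume "0 \<le> x" "x \<le> 1"
    then show "\<exists>y. (\<phi> has_real_derivative y) (at x) \<and> y \<le> 0" using der[of x] nonpos[of x] by blast
  qed simp
  moreover have "line X D 0 = X" by (simp add: line_def pt_add_def blk_add_def blk_scale_def)
  moreover have "line X D 1 = X'" by (simp add: line_def pt_add_def blk_add_def blk_scale_def D_def pt_diff_def blk_diff_def)
  ultimately have le: "f X' \<le> f X + c0 + A / 2" by (simp add: \<phi>_def)
  have eq: "c0 + A / 2 = (\<Sum>i<p. tr_inner (m i) (n i) (G X i) (blk_diff (X' i) (X i))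
      + (L0 i + L1 i * dual_norm (m i) (n i) (N i) (G X i)) / 2 * (N i (blk_diff (X' i) (X i)))^2)"
    by (simp add: c0_def A_def S_inner_def Di a_def sum.distrib sum_divide_distrib)
  show ?thesis using le eq by linarith
qed



lemma quad_ineq:
  fixes a x l :: real
  assumes "0 \<le> a" "a = 0 \<Longrightarrow> x = 0"
  shows "l * x - l^2 * a / 2 \<le> x^2 / (2 * a)"
proof (cases "a = 0")
  case True then show ?thesis using assms by simp
next
  case False
  then have a0: "0 < a" using assms by simp
  have "x^2 / (2 * a) - (l * x - l^2 * a / 2) = (x - l * a)^2 / (2 * a)"
    using a0 by (simp add: field_simps power2_eq_square)
  moreover have "0 \<le> (x - l * a)^2 / (2 * a)" using a0 by simp
  ultimately show ?thesis by linarith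
qed

lemma arith1:
  fixes \<epsilon> Ls M B S Q :: real
  assumes "0 < \<epsilon>" "0 \<le> Ls" "0 \<le> M" "B = Ls + M * \<epsilon>" "0 < B" "\<epsilon> < S" "Q \<le> M * S"
  shows "\<epsilon>^2 / (2 * B) < \<epsilon> / B * S - (\<epsilon> / B)^2 / 2 * (Ls + Q)"
proof -
  define l where "l = \<epsilon> / B"
  have l0: "0 < l" using assms by (simp add: l_def)
  have lM: "l * M \<le> 1" using assms by (simp add: l_def field_simps)
  have c0: "0 < l * (1 - l * M / 2)" using l0 lM by (intro mult_pos_pos) auto
  have "l^2 / 2 * (Ls + Q) \<le> l^2 / 2 * (Ls + M * S)" using assms by (intro mult_left_mono) auto
  then have "l * S - l^2 / 2 * (Ls + M * S) \<le> l * S - l^2 / 2 * (Ls + Q)" by linarith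
  moreover have "l * S - l^2 / 2 * (Ls + M * S) = l * (1 - l * M / 2) * S - l^2 / 2 * Ls"
    by (simp add: field_simps power2_eq_square)
  moreover have "l * (1 - l * M / 2) * \<epsilon> < l * (1 - l * M / 2) * S"
    using c0 assms by (intro mult_strict_left_mono) auto
  moreover have "l * (1 - l * M / 2) * \<epsilon> - l^2 / 2 * Ls = \<epsilon>^2 / (2 * B)"
  proof -
    have Ls: "Ls = B - M * \<epsilon>" using assms(4) by simp
    show ?thesis using assms(5) unfolding Ls by (simp add: l_def field_simps power2_eq_square)
  qed
  ultimately show ?thesis by (simp add: l_def)
qed

lemma arith2:
  fixes \<epsilon> H C B T :: real
  assumes "0 < \<epsilon>" "0 < H" "0 \<le> C" "B = C + \<epsilon> * H" "H * \<epsilon> < T"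
  shows "(\<epsilon> * H)^2 / (2 * B) < H * \<epsilon> / B * T - (H * \<epsilon> / B)^2 / 2 * (C + T)"
proof -
  define u where "u = H * \<epsilon> / B"
  have B0: "0 < B" using assms by (simp add: add_nonneg_pos)
  have u0: "0 < u" using assms B0 by (simp add: u_def)
  have u1: "u \<le> 1" using assms B0 by (simp add: u_def field_simps)
  have c0: "0 < u * (1 - u / 2)" using u0 u1 by (intro mult_pos_pos) auto
  have "u * T - u^2 / 2 * (C + T) = u * (1 - u / 2) * T - u^2 / 2 * C"
    by (simp add: field_simps power2_eq_square)
  moreover have "u * (1 - u / 2) * (H * \<epsilon>) < u * (1 - u / 2) * T"
    using c0 assms by (intro mult_strict_left_mono) auto
  moreover have "u * (1 - u / 2) * (H * \<epsilon>) - u^2 / 2 * C = (\<epsilon> * H)^2 / (2 * B)"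
  proof -
    have Cq: "C = B - \<epsilon> * H" using assms(4) by simp
    show ?thesis using B0 unfolding Cq by (simp add: u_def field_simps power2_eq_square)
  qed
  ultimately show ?thesis by (simp add: u_def)
qed



theorem theorem3:
  fixes p :: nat and m n :: "nat \<Rightarrow> nat"
    and N :: "nat \<Rightarrow> blk \<Rightarrow> real"
    and f :: "pt \<Rightarrow> real" and G :: "pt \<Rightarrow> pt"
    and L0 L1 :: "nat \<Rightarrow> real" and \<epsilon> :: real
    and X :: "nat \<Rightarrow> pt"
  assumes p_pos: "0 < p"
    and norms: "\<forall>i<p. is_norm_on (m i) (n i) (N i)"
    and grad: "has_cont_gradient_on p m n f G"
    and bdd: "bdd_below (f ` prod_space p m n)"
    and L_nonneg: "\<forall>i<p. 0 \<le> L0 i \<and> 0 \<le> L1 i"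
    and smooth: "\<forall>i<p. \<forall>Y\<in>prod_space p m n. \<forall>Z\<in>prod_space p m n.
        dual_norm (m i) (n i) (N i) (blk_diff (G Y i) (G Z i))
          \<le> (L0 i + L1 i * dual_norm (m i) (n i) (N i) (G Y i)) * N i (blk_diff (Y i) (Z i))"
    and eps: "0 < \<epsilon>"
    and X_in: "\<forall>k. X k \<in> prod_space p m n"
    and well_def: "\<forall>k. \<forall>i<p. G (X k) i \<noteq> (\<lambda>r c. 0) \<longrightarrow>
        0 < L0 i + L1 i * dual_norm (m i) (n i) (N i) (G (X k) i)"
    and step: "\<forall>k. \<forall>i<p.
        (let g = G (X k) i;
             t = (if g = (\<lambda>r c. 0) then 0
                  else dual_norm (m i) (n i) (N i) g
                       / (L0 i + L1 i * dual_norm (m i) (n i) (N i) g));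
             C = {Y \<in> mat_space (m i) (n i). N i (blk_diff Y (X k i)) \<le> t}
         in X (Suc k) i \<in> C \<and>
            (\<forall>Y\<in>C. tr_inner (m i) (n i) g (X (Suc k) i) \<le> tr_inner (m i) (n i) g Y))"
  shows
    "(let finf = Inf (f ` prod_space p m n);
          \<Delta>0 = f (X 0) - finf;
          L1max = Max (L1 ` {..<p});
          K = \<lceil>2 * \<Delta>0 * (\<Sum>i<p. L0 i) / \<epsilon>\<^sup>2 + 2 * \<Delta>0 * L1max / \<epsilon>\<rceil>
      in 1 \<le> K \<longrightarrow>
         Min ((\<lambda>k. \<Sum>i<p. dual_norm (m i) (n i) (N i) (G (X k) i)) ` {..<nat K}) \<le> \<epsilon>)
   \<and>
    ((\<forall>i<p. 0 < L1 i) \<longrightarrow>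
     (let finf = Inf (f ` prod_space p m n);
          \<Delta>0 = f (X 0) - finf;
          H = (1 / real p) * (\<Sum>j<p. 1 / L1 j);
          K = \<lceil>2 * \<Delta>0 * (\<Sum>i<p. L0 i / (L1 i)\<^sup>2) / (\<epsilon>\<^sup>2 * H\<^sup>2) + 2 * \<Delta>0 / (\<epsilon> * H)\<rceil>
      in 1 \<le> K \<longrightarrow>
         Min ((\<lambda>k. \<Sum>i<p. ((1 / L1 i) / H) * dual_norm (m i) (n i) (N i) (G (X k) i))
               ` {..<nat K}) \<le> \<epsilon>))"
proof -
  define PS where "PS = prod_space p m n"
  define x where "x k i = dual_norm (m i) (n i) (N i) (G (X k) i)" for k i
  define a where "a k i = L0 i + L1 i * x k i" for k i
  define dec where "dec k = (\<Sum>i<p. (x k i)^2 / (2 * a k i))" for k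
  define finf where "finf = Inf (f ` PS)"
  have x0: "0 \<le> x k i" if "i < p" for k i
    using dual_nonneg[OF norms[rule_format, OF that]] by (simp add: x_def)
  have a0: "0 \<le> a k i" if "i < p" for k i
    using x0[OF that] L_nonneg that by (simp add: a_def)
  have az: "x k i = 0" if "i < p" "a k i = 0" for k i
  proof (cases "G (X k) i = (\<lambda>r c. 0)")
    case True
    then show ?thesis using dual_zero[OF norms[rule_format, OF that(1)]] by (simp add: x_def)
  next
    case False
    then have "0 < a k i" using well_def that(1) by (simp add: a_def x_def)
    then show ?thesis using that(2) by simp
  qed
  have desc: "f (X (Suc k)) \<le> f (X k) - dec k" for k
  proof -
    have "f (X (Suc k)) \<le> f (X k) + (\<Sum>i<p. tr_inner (m i) (n i) (G (X k) i) (blk_diff (X (Suc k) i) (X k i))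
      + a k i / 2 * (N i (blk_diff (X (Suc k) i) (X k i)))^2)"
      using descent[OF norms grad smooth L_nonneg X_in[rule_format, of k] X_in[rule_format, of "Suc k"]]
      by (simp add: a_def x_def)
    also have "\<dots> \<le> f (X k) + (\<Sum>i<p. - ((x k i)^2 / (2 * a k i)))"
    proof (intro add_left_mono sum_mono)
      fix i assume "i \<in> {..<p}"
      then have i: "i < p" by simp
      note nrm = norms[rule_format, OF i]
      have GXm: "G (X k) i \<in> mat_space (m i) (n i)"
        using grad X_in i unfolding has_cont_gradient_on_def prod_space_def by blast
      have Xkm: "X k i \<in> mat_space (m i) (n i)" using X_in i by (simp add: prod_space_def)
      define t where "t = (if G (X k) i = (\<lambda>r c. 0) then 0
                  else dual_norm (m i) (n i) (N i) (G (X k) i)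
                       / (L0 i + L1 i * dual_norm (m i) (n i) (N i) (G (X k) i)))"
      have st: "X (Suc k) i \<in> {Y \<in> mat_space (m i) (n i). N i (blk_diff Y (X k i)) \<le> t} \<and>
            (\<forall>Y\<in>{Y \<in> mat_space (m i) (n i). N i (blk_diff Y (X k i)) \<le> t}.
               tr_inner (m i) (n i) (G (X k) i) (X (Suc k) i) \<le> tr_inner (m i) (n i) (G (X k) i) Y)"
        using step[rule_format, OF i, of k] unfolding Let_def t_def by simp
      have "tr_inner (m i) (n i) (G (X k) i) (blk_diff (X (Suc k) i) (X k i))
          + a k i / 2 * (N i (blk_diff (X (Suc k) i) (X k i)))^2
          \<le> - ((dual_norm (m i) (n i) (N i) (G (X k) i))^2 / (2 * a k i))"
      proof (rule block_step[OF nrm Xkm a0[OF i]])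
        show "G (X k) i \<noteq> (\<lambda>r c. 0) \<Longrightarrow> 0 < a k i" using well_def i by (simp add: a_def x_def)
        show "t = (if G (X k) i = (\<lambda>r c. 0) then 0 else dual_norm (m i) (n i) (N i) (G (X k) i) / a k i)"
          by (simp add: t_def a_def x_def)
      qed (use st in auto)
      then show "tr_inner (m i) (n i) (G (X k) i) (blk_diff (X (Suc k) i) (X k i))
          + a k i / 2 * (N i (blk_diff (X (Suc k) i) (X k i)))^2 \<le> - ((x k i)^2 / (2 * a k i))"
        by (simp add: x_def)
    qed
    finally show ?thesis by (simp add: dec_def sum_negf)
  qed
  have finf_le: "finf \<le> f (X k)" for k
    unfolding finf_def PS_def using bdd X_in by (intro cInf_lower) auto
  have tele: "f (X K) \<le> f (X 0) - (\<Sum>k<K. dec k)" for K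
  proof (induction K)
    case 0 then show ?case by simp
  next
    case (Suc K) then show ?case using desc[of K] by simp
  qed
  have key: False if d0: "0 < \<delta>" and K1: "1 \<le> K" and Kge: "(f (X 0) - finf) / \<delta> \<le> real K"
    and dec_gt: "\<forall>k<K. \<delta> < dec k" for K :: nat and \<delta> :: real
  proof -
    have "(\<Sum>k<K. \<delta>) < (\<Sum>k<K. dec k)"
      using K1 dec_gt by (intro sum_strict_mono) (auto simp: lessThan_empty_iff)
    then have "real K * \<delta> < (\<Sum>k<K. dec k)" by simp
    also have "\<dots> \<le> f (X 0) - finf" using tele[of K] finf_le[of K] by linarith
    finally show False using Kge d0 by (simp add: divide_le_eq)
  qed
  have lower: "(\<Sum>i<p. lam i * x k i - (lam i)^2 * a k i / 2) \<le> dec k" for lam k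
    unfolding dec_def by (intro sum_mono quad_ineq a0 az) auto
  have Delta0: "0 \<le> f (X 0) - finf" using finf_le[of 0] by simp
  show ?thesis
  proof (intro conjI impI)
    show "let finf = Inf (f ` prod_space p m n);
          \<Delta>0 = f (X 0) - finf;
          L1max = Max (L1 ` {..<p});
          K = \<lceil>2 * \<Delta>0 * (\<Sum>i<p. L0 i) / \<epsilon>\<^sup>2 + 2 * \<Delta>0 * L1max / \<epsilon>\<rceil>
      in 1 \<le> K \<longrightarrow>
         Min ((\<lambda>k. \<Sum>i<p. dual_norm (m i) (n i) (N i) (G (X k) i)) ` {..<nat K}) \<le> \<epsilon>"
      unfolding Let_def finf_def[symmetric] PS_def[symmetric] x_def[symmetric]
    proof (intro impI)
      define Ls where "Ls = (\<Sum>i<p. L0 i)"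
      define M where "M = Max (L1 ` {..<p})"
      define \<Delta> where "\<Delta> = f (X 0) - finf"
      define B where "B = Ls + M * \<epsilon>"
      define r where "r = 2 * \<Delta> * Ls / \<epsilon>\<^sup>2 + 2 * \<Delta> * M / \<epsilon>"
      assume K1: "1 \<le> \<lceil>2 * (f (X 0) - finf) * (\<Sum>i<p. L0 i) / \<epsilon>\<^sup>2 + 2 * (f (X 0) - finf) * Max (L1 ` {..<p}) / \<epsilon>\<rceil>"
      then have K1': "1 \<le> \<lceil>r\<rceil>" by (simp add: r_def Ls_def M_def \<Delta>_def)
      have LM: "L1 i \<le> M" if "i < p" for i unfolding M_def using that by (intro Max_ge) auto
      have M0: "0 \<le> M" using LM[OF p_pos] L_nonneg p_pos by force
      have Ls0: "0 \<le> Ls" unfolding Ls_def using L_nonneg by (intro sum_nonneg) auto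
      have rB: "r = 2 * \<Delta> * B / \<epsilon>^2" using eps by (simp add: r_def B_def field_simps power2_eq_square)
      have B0: "0 < B"
      proof (rule ccontr)
        assume "\<not> 0 < B"
        moreover have "0 \<le> B" using Ls0 M0 eps by (simp add: B_def)
        ultimately have "B = 0" by simp
        then have "r = 0" using rB by simp
        then show False using K1' by simp
      qed
      show "Min ((\<lambda>k. \<Sum>i<p. x k i) ` {..<nat \<lceil>2 * (f (X 0) - finf) * (\<Sum>i<p. L0 i) / \<epsilon>\<^sup>2 + 2 * (f (X 0) - finf) * Max (L1 ` {..<p}) / \<epsilon>\<rceil>}) \<le> \<epsilon>"
      proof (rule ccontr)
        assume "\<not> ?thesis"
        then have "\<epsilon> < Min ((\<lambda>k. \<Sum>i<p. x k i) ` {..<nat \<lceil>r\<rceil>})"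
          by (simp add: r_def Ls_def M_def \<Delta>_def)
        then have S: "\<forall>k<nat \<lceil>r\<rceil>. \<epsilon> < (\<Sum>i<p. x k i)"
          using K1' by (subst (asm) Min_gr_iff) (auto simp: lessThan_empty_iff)
        show False
        proof (rule key[of "\<epsilon>^2 / (2 * B)" "nat \<lceil>r\<rceil>"])
          show "0 < \<epsilon>^2 / (2 * B)" using eps B0 by simp
          show "1 \<le> nat \<lceil>r\<rceil>" using nat_mono[OF K1'] by simp
          have "(f (X 0) - finf) / (\<epsilon>^2 / (2 * B)) = r" using B0 eps by (simp add: rB \<Delta>_def)
          also have "\<dots> \<le> real (nat \<lceil>r\<rceil>)"
          proof -
            have "real (nat \<lceil>r\<rceil>) = real_of_int \<lceil>r\<rceil>" using K1' by simp
            then show ?thesis using le_of_int_ceiling[of r] by linarith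
          qed
          finally show "(f (X 0) - finf) / (\<epsilon>^2 / (2 * B)) \<le> real (nat \<lceil>r\<rceil>)" .
          show "\<forall>k<nat \<lceil>r\<rceil>. \<epsilon>^2 / (2 * B) < dec k"
          proof (intro allI impI)
            fix k assume k: "k < nat \<lceil>r\<rceil>"
            define Q where "Q = (\<Sum>i<p. L1 i * x k i)"
            have Q: "Q \<le> M * (\<Sum>i<p. x k i)"
              unfolding Q_def sum_distrib_left using LM x0 by (intro sum_mono mult_right_mono) auto
            have "\<epsilon>^2 / (2 * B) < \<epsilon> / B * (\<Sum>i<p. x k i) - (\<epsilon> / B)^2 / 2 * (Ls + Q)"
              using arith1[OF eps Ls0 M0 B_def B0 S[rule_format, OF k] Q] .
            also have "\<dots> = (\<Sum>i<p. (\<epsilon> / B) * x k i - (\<epsilon> / B)^2 * a k i / 2)"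
            proof -
              have sa: "(\<Sum>i<p. a k i) = Ls + Q" by (simp add: a_def Ls_def Q_def sum.distrib)
              have "(\<Sum>i<p. (\<epsilon> / B) * x k i - (\<epsilon> / B)^2 * a k i / 2)
                  = (\<Sum>i<p. (\<epsilon> / B) * x k i - (\<epsilon> / B)^2 / 2 * a k i)" by simp
              also have "\<dots> = \<epsilon> / B * (\<Sum>i<p. x k i) - (\<epsilon> / B)^2 / 2 * (\<Sum>i<p. a k i)"
                by (simp only: sum_subtractf sum_distrib_left)
              finally show ?thesis using sa by simp
            qed
            also have "\<dots> \<le> dec k" by (rule lower)
            finally show "\<epsilon>^2 / (2 * B) < dec k" .
          qed
        qed
      qed
    qed
  next
    assume L1pos: "\<forall>i<p. 0 < L1 i"
    show "let finf = Inf (f ` prod_space p m n);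
          \<Delta>0 = f (X 0) - finf;
          H = (1 / real p) * (\<Sum>j<p. 1 / L1 j);
          K = \<lceil>2 * \<Delta>0 * (\<Sum>i<p. L0 i / (L1 i)\<^sup>2) / (\<epsilon>\<^sup>2 * H\<^sup>2) + 2 * \<Delta>0 / (\<epsilon> * H)\<rceil>
      in 1 \<le> K \<longrightarrow>
         Min ((\<lambda>k. \<Sum>i<p. ((1 / L1 i) / H) * dual_norm (m i) (n i) (N i) (G (X k) i))
               ` {..<nat K}) \<le> \<epsilon>"
      unfolding Let_def finf_def[symmetric] PS_def[symmetric] x_def[symmetric]
    proof (intro impI)
      define H where "H = (1 / real p) * (\<Sum>j<p. 1 / L1 j)"
      define C where "C = (\<Sum>i<p. L0 i / (L1 i)\<^sup>2)"
      define \<Delta> where "\<Delta> = f (X 0) - finf"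
      define B where "B = C + \<epsilon> * H"
      define r where "r = 2 * \<Delta> * C / (\<epsilon>\<^sup>2 * H\<^sup>2) + 2 * \<Delta> / (\<epsilon> * H)"
      assume K1: "1 \<le> \<lceil>2 * (f (X 0) - finf) * (\<Sum>i<p. L0 i / (L1 i)\<^sup>2) / (\<epsilon>\<^sup>2 * (1 / real p * (\<Sum>j<p. 1 / L1 j))\<^sup>2) +
              2 * (f (X 0) - finf) / (\<epsilon> * (1 / real p * (\<Sum>j<p. 1 / L1 j)))\<rceil>"
      then have K1': "1 \<le> \<lceil>r\<rceil>" by (simp add: r_def H_def C_def \<Delta>_def)
      have H0: "0 < H" unfolding H_def using p_pos L1pos
        by (intro mult_pos_pos sum_pos) auto
      have C0: "0 \<le> C" unfolding C_def using L_nonneg by (intro sum_nonneg) auto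
      have B0: "0 < B" using C0 mult_pos_pos[OF eps H0] unfolding B_def by linarith
      have rB: "r = 2 * \<Delta> * B / (\<epsilon> * H)^2" using eps H0
        by (simp add: r_def B_def field_simps power2_eq_square)
      show "Min ((\<lambda>k. \<Sum>i<p. 1 / L1 i / (1 / real p * (\<Sum>j<p. 1 / L1 j)) * x k i) ` {..<nat \<lceil>2 * (f (X 0) - finf) * (\<Sum>i<p. L0 i / (L1 i)\<^sup>2) / (\<epsilon>\<^sup>2 * (1 / real p * (\<Sum>j<p. 1 / L1 j))\<^sup>2) +
              2 * (f (X 0) - finf) / (\<epsilon> * (1 / real p * (\<Sum>j<p. 1 / L1 j)))\<rceil>}) \<le> \<epsilon>"
      proof (rule ccontr)
        assume "\<not> ?thesis"
        then have "\<epsilon> < Min ((\<lambda>k. \<Sum>i<p. 1 / L1 i / H * x k i) ` {..<nat \<lceil>r\<rceil>})"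
          by (simp add: r_def H_def C_def \<Delta>_def)
        then have S: "\<forall>k<nat \<lceil>r\<rceil>. \<epsilon> < (\<Sum>i<p. 1 / L1 i / H * x k i)"
          using K1' by (subst (asm) Min_gr_iff) (auto simp: lessThan_empty_iff)
        show False
        proof (rule key[of "(\<epsilon> * H)^2 / (2 * B)" "nat \<lceil>r\<rceil>"])
          show "0 < (\<epsilon> * H)^2 / (2 * B)" using eps B0 H0 by simp
          show "1 \<le> nat \<lceil>r\<rceil>" using nat_mono[OF K1'] by simp
          have "(f (X 0) - finf) / ((\<epsilon> * H)^2 / (2 * B)) = r" using B0 eps H0 by (simp add: rB \<Delta>_def)
          also have "\<dots> \<le> real (nat \<lceil>r\<rceil>)"
          proof -
            have "real (nat \<lceil>r\<rceil>) = real_of_int \<lceil>r\<rceil>" using K1' by simp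
            then show ?thesis using le_of_int_ceiling[of r] by linarith
          qed
          finally show "(f (X 0) - finf) / ((\<epsilon> * H)^2 / (2 * B)) \<le> real (nat \<lceil>r\<rceil>)" .
          show "\<forall>k<nat \<lceil>r\<rceil>. (\<epsilon> * H)^2 / (2 * B) < dec k"
          proof (intro allI impI)
            fix k assume k: "k < nat \<lceil>r\<rceil>"
            define T where "T = (\<Sum>i<p. x k i / L1 i)"
            have "(\<Sum>i<p. 1 / L1 i / H * x k i) = T / H"
              by (simp add: T_def sum_divide_distrib)
            then have T: "H * \<epsilon> < T" using S[rule_format, OF k] H0 by (simp add: less_divide_eq mult.commute)
            define u where "u = H * \<epsilon> / B"
            have "(\<epsilon> * H)^2 / (2 * B) < u * T - u^2 / 2 * (C + T)"
              unfolding u_def using arith2[OF eps H0 C0 B_def T] .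
            also have "\<dots> = (\<Sum>i<p. (u / L1 i) * x k i - (u / L1 i)^2 * a k i / 2)"
            proof -
              have "(u / L1 i) * x k i - (u / L1 i)^2 * a k i / 2
                  = u * (x k i / L1 i) - u^2 / 2 * (L0 i / (L1 i)\<^sup>2 + x k i / L1 i)" if "i < p" for i
              proof -
                have "L1 i \<noteq> 0" using L1pos that by (metis less_irrefl)
                then show ?thesis by (simp add: a_def field_simps power2_eq_square)
              qed
              then have "(\<Sum>i<p. (u / L1 i) * x k i - (u / L1 i)^2 * a k i / 2)
                  = (\<Sum>i<p. u * (x k i / L1 i) - u^2 / 2 * (L0 i / (L1 i)\<^sup>2 + x k i / L1 i))"
                by (intro sum.cong) auto
              also have "\<dots> = u * T - u^2 / 2 * (C + T)"
                by (simp add: T_def C_def sum_subtractf sum_distrib_left sum.distrib distrib_left)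
              finally show ?thesis by simp
            qed
            also have "\<dots> \<le> dec k" by (rule lower)
            finally show "(\<epsilon> * H)^2 / (2 * B) < dec k" .
          qed
        qed
      qed
    qed
  qed
qed


end
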